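(* Let $L>0$, $K>0$ and let $p\in C^{0,1}([0,L],\mathbb{R}^d)$ be the arc length parametrisation of an (open) polygon with vertices $p(a_0),\dots,p(a_n)$, $0=a_0<a_1<\dots<a_n=L$, such that $\mathrm{maxCurv}_2(p)\le K$ and $KL\le\pi$. Let $\eta:[0,L]\to\mathbb{R}^d$ be the arc length parametrisation of (an arc of) a circle of curvature $K$. Then $$|\eta(L)-\eta(0)|<|p(L)-p(0)|.$$
   Context: For an open polygon $p$ with vertices $y_k=p(a_k)$, the discrete curvature at an interior vertex $y_k$ ($1\le k\le n-1$) is $\kappa_{d,2}(y_{k-1},y_k,y_{k+1})=\frac{\phi_k}{(|y_{k-1}-y_k|+|y_{k+1}-y_k|)/2}$, where $\phi_k=\measuredangle(y_k-y_{k-1},y_{k+1}-y_k)\in[0,\pi]$ is the exterior angle at $y_k$; $\mathrm{maxCurv}_2(p)$ is the maximum of $\kappa_{d,2}$ over all interior vertices (and $0$ if there are none). *)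

theory Defs
  imports "HOL-Analysis.Analysis"
begin

definition vec_angle :: "'a::euclidean_space \<Rightarrow> 'a \<Rightarrow> real" where
  "vec_angle u v = arccos ((u \<bullet> v) / (norm u * norm v))"

definition kappa_d2 :: "'a::euclidean_space \<Rightarrow> 'a \<Rightarrow> 'a \<Rightarrow> real" where
  "kappa_d2 x y z = vec_angle (y - x) (z - y) / ((norm (x - y) + norm (z - y)) / 2)"

definition maxCurv2 :: "(nat \<Rightarrow> 'a::euclidean_space) \<Rightarrow> nat \<Rightarrow> real" where
  "maxCurv2 y n = (if n < 2 then 0
     else Max ((\<lambda>k. kappa_d2 (y (k - 1)) (y k) (y (k + 1))) ` {1..n - 1}))"

definition arclength_polygon :: "(real \<Rightarrow> 'a::euclidean_space) \<Rightarrow> (nat \<Rightarrow> real) \<Rightarrow> nat \<Rightarrow> real \<Rightarrow> bool" where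
  "arclength_polygon p a n L \<longleftrightarrow>
     a 0 = 0 \<and> a n = L \<and> (\<forall>k<n. a k < a (Suc k)) \<and>
     (\<forall>k<n. norm (p (a (Suc k)) - p (a k)) = a (Suc k) - a k) \<and>
     (\<forall>k<n. \<forall>t\<in>{a k..a (Suc k)}.
        p t = p (a k) + ((t - a k) / (a (Suc k) - a k)) *\<^sub>R (p (a (Suc k)) - p (a k)))"

definition circle_arc_param :: "real \<Rightarrow> (real \<Rightarrow> 'a::euclidean_space) \<Rightarrow> bool" where
  "circle_arc_param K \<eta> \<longleftrightarrow> (\<exists>c u v. u \<bullet> u = 1 \<and> v \<bullet> v = 1 \<and> u \<bullet> v = 0 \<and>
     (\<forall>s. \<eta> s = c + (1 / K) *\<^sub>R (cos (K * s) *\<^sub>R u + sin (K * s) *\<^sub>R v)))"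

end

theory Submission imports Defs begin

lemma sin_lt_self: fixes h :: real assumes "0 < h" "h \<le> pi/2" shows "sin h < h"
proof -
  have s: "sin (h/2) > 0" using assms by (intro sin_gt_zero) auto
  have c: "cos (h/2) < 1" using cos_monotone_0_pi[of 0 "h/2"] assms by auto
  have "sin h = 2 * sin (h/2) * cos (h/2)" using sin_double[of "h/2"] by simp
  also have "\<dots> < 2 * sin (h/2)" using s c by simp
  also have "\<dots> \<le> h" using sin_x_le_x[of "h/2"] assms by simp
  finally show ?thesis .
qed

lemma unit_inner_bound: fixes u v :: "'a::euclidean_space"
  assumes "norm u = 1" "norm v = 1" shows "\<bar>u \<bullet> v\<bar> \<le> 1"
  using Cauchy_Schwarz_ineq2[of u v] assms by simp

lemma angle_triangle: fixes u v w :: "'a::euclidean_space"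
  assumes u: "norm u = 1" and v: "norm v = 1" and w: "norm w = 1"
  shows "arccos (u \<bullet> w) \<le> arccos (u \<bullet> v) + arccos (v \<bullet> w)"
proof -
  define \<alpha> where "\<alpha> = arccos (u \<bullet> v)"
  define \<beta> where "\<beta> = arccos (v \<bullet> w)"
  have uv: "\<bar>u \<bullet> v\<bar> \<le> 1" and vw: "\<bar>v \<bullet> w\<bar> \<le> 1" and uw: "\<bar>u \<bullet> w\<bar> \<le> 1"
    using unit_inner_bound assms by blast+
  have ca: "cos \<alpha> = u \<bullet> v" and cb: "cos \<beta> = v \<bullet> w" using uv vw cos_arccos_abs \<alpha>_def \<beta>_def by auto
  have sa: "sin \<alpha> = sqrt (1 - (u \<bullet> v)^2)" and sb: "sin \<beta> = sqrt (1 - (v \<bullet> w)^2)"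
    using uv vw sin_arccos_abs \<alpha>_def \<beta>_def by auto
  have a0: "0 \<le> \<alpha>" "\<alpha> \<le> pi" and b0: "0 \<le> \<beta>" "\<beta> \<le> pi"
    using uv vw arccos_bounded \<alpha>_def \<beta>_def by auto
  define up where "up = u - (u \<bullet> v) *\<^sub>R v"
  define wp where "wp = w - (v \<bullet> w) *\<^sub>R v"
  have vv: "v \<bullet> v = 1" using v by (simp add: norm_eq_1)
  have uu: "u \<bullet> u = 1" using u by (simp add: norm_eq_1)
  have ww: "w \<bullet> w = 1" using w by (simp add: norm_eq_1)
  have dec: "u \<bullet> w = (u \<bullet> v) * (v \<bullet> w) + up \<bullet> wp"
    unfolding up_def wp_def using vv by (simp add: algebra_simps inner_commute)
  have nup: "(norm up)^2 = 1 - (u \<bullet> v)^2"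
    unfolding power2_norm_eq_inner up_def using vv uu by (simp add: algebra_simps inner_commute power2_eq_square)
  have nwp: "(norm wp)^2 = 1 - (v \<bullet> w)^2"
    unfolding power2_norm_eq_inner wp_def using vv ww by (simp add: algebra_simps inner_commute power2_eq_square)
  have "norm up = sin \<alpha>" using nup sa by (metis norm_ge_zero real_sqrt_abs abs_of_nonneg)
  moreover have "norm wp = sin \<beta>" using nwp sb by (metis norm_ge_zero real_sqrt_abs abs_of_nonneg)
  ultimately have "\<bar>up \<bullet> wp\<bar> \<le> sin \<alpha> * sin \<beta>"
    using Cauchy_Schwarz_ineq2[of up wp] by simp
  hence "up \<bullet> wp \<ge> - (sin \<alpha> * sin \<beta>)" by (simp add: abs_le_iff)
  hence ge: "u \<bullet> w \<ge> cos (\<alpha> + \<beta>)" using dec ca cb by (simp add: cos_add)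
  show ?thesis
  proof (cases "\<alpha> + \<beta> \<le> pi")
    case True
    have "arccos (u \<bullet> w) \<le> arccos (cos (\<alpha> + \<beta>))"
      using ge uw by (intro arccos_le_arccos) auto
    also have "\<dots> = \<alpha> + \<beta>" using True a0 b0 by (intro arccos_cos) auto
    finally show ?thesis unfolding \<alpha>_def \<beta>_def .
  next
    case False
    have "arccos (u \<bullet> w) \<le> pi" using arccos_ubound[of "u \<bullet> w"] uw by (simp add: abs_le_iff)
    then show ?thesis using False unfolding \<alpha>_def \<beta>_def by linarith
  qed
qed

lemma slerp_exists: fixes u w :: "'a::euclidean_space"
  assumes u: "norm u = 1" and w: "norm w = 1" and lt: "arccos (u \<bullet> w) < pi"
    and al: "0 \<le> \<alpha>" "\<alpha> \<le> arccos (u \<bullet> w)"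
  shows "\<exists>m. norm m = 1 \<and> arccos (u \<bullet> m) \<le> \<alpha> \<and> arccos (m \<bullet> w) \<le> arccos (u \<bullet> w) - \<alpha>"
proof (cases "\<alpha> = 0")
  case True
  have "u \<bullet> u = 1" using u by (simp add: norm_eq_1)
  then show ?thesis using True u by (intro exI[of _ u]) auto
next
  case False
  define \<phi> where "\<phi> = arccos (u \<bullet> w)"
  have uw: "\<bar>u \<bullet> w\<bar> \<le> 1" using unit_inner_bound assms by blast
  have cp: "cos \<phi> = u \<bullet> w" using uw cos_arccos_abs \<phi>_def by auto
  have p0: "0 < \<phi>" "\<phi> < pi" using False al lt \<phi>_def by auto
  have sp: "sin \<phi> > 0" using p0 by (intro sin_gt_zero) auto
  have uu: "u \<bullet> u = 1" using u by (simp add: norm_eq_1)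
  have ww: "w \<bullet> w = 1" using w by (simp add: norm_eq_1)
  define m where "m = (sin (\<phi> - \<alpha>) / sin \<phi>) *\<^sub>R u + (sin \<alpha> / sin \<phi>) *\<^sub>R w"
  have mu: "u \<bullet> m = cos \<alpha>"
  proof -
    have "u \<bullet> m = (sin (\<phi> - \<alpha>) + sin \<alpha> * cos \<phi>) / sin \<phi>"
      unfolding m_def using uu cp by (simp add: inner_add_right add_divide_distrib)
    also have "\<dots> = cos \<alpha>" using sp by (simp add: sin_diff field_simps)
    finally show ?thesis .
  qed
  have mw: "m \<bullet> w = cos (\<phi> - \<alpha>)"
  proof -
    have "m \<bullet> w = (sin (\<phi> - \<alpha>) * cos \<phi> + sin \<alpha>) / sin \<phi>"
      unfolding m_def using ww cp by (simp add: inner_add_left add_divide_distrib)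
    also have "\<dots> = cos (\<phi> - \<alpha>)"
    proof -
      have "sin \<alpha> = sin \<phi> * cos (\<phi> - \<alpha>) - cos \<phi> * sin (\<phi> - \<alpha>)"
        using sin_diff[of \<phi> "\<phi> - \<alpha>"] by simp
      then show ?thesis using sp by (simp add: field_simps)
    qed
    finally show ?thesis .
  qed
  have mm: "m \<bullet> m = 1"
  proof -
    have "m \<bullet> m = (sin (\<phi> - \<alpha>) / sin \<phi>) * (u \<bullet> m) + (sin \<alpha> / sin \<phi>) * (w \<bullet> m)"
      by (subst (1) m_def) (simp add: inner_add_left)
    also have "\<dots> = (sin (\<phi> - \<alpha>) * (u \<bullet> m) + sin \<alpha> * (w \<bullet> m)) / sin \<phi>"
      by (simp add: add_divide_distrib)
    also have "\<dots> = (sin (\<phi> - \<alpha>) * cos \<alpha> + sin \<alpha> * cos (\<phi> - \<alpha>)) / sin \<phi>"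
      using mu mw by (simp add: inner_commute)
    also have "\<dots> = 1" using sp sin_add[of "\<phi> - \<alpha>" \<alpha>] by (simp add: algebra_simps)
    finally show ?thesis .
  qed
  have "norm m = 1" using mm by (simp add: norm_eq_1)
  moreover have "arccos (u \<bullet> m) \<le> \<alpha>" using mu al p0 arccos_cos[of \<alpha>] by (simp add: \<phi>_def)
  moreover have "arccos (m \<bullet> w) \<le> \<phi> - \<alpha>" using mw al p0 arccos_cos[of "\<phi> - \<alpha>"] by (simp add: \<phi>_def)
  ultimately show ?thesis unfolding \<phi>_def by blast
qed
lemma crossing: fixes f :: "nat \<Rightarrow> real"
  shows "f 0 \<le> c \<Longrightarrow> c \<le> f N \<Longrightarrow> 0 < N \<Longrightarrow> \<exists>j<N. f j \<le> c \<and> c \<le> f (Suc j)"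
proof (induction N)
  case 0 then show ?case by simp
next
  case (Suc N)
  show ?case
  proof (cases "f N \<le> c \<and> 0 < N")
    case True
    then show ?thesis using Suc.prems by (intro exI[of _ N]) auto
  next
    case False
    then show ?thesis
    proof (cases "N = 0")
      case True then show ?thesis using Suc.prems by auto
    next
      case False2: False
      with False have "c \<le> f N" by auto
      then obtain j where "j < N" "f j \<le> c" "c \<le> f (Suc j)" using Suc False2 by auto
      then show ?thesis by (intro exI[of _ j]) auto
    qed
  qed
qed

lemma mono_seq: fixes a :: "nat \<Rightarrow> real"
  assumes "\<forall>k<n. a k < a (Suc k)"
  shows "i \<le> j \<Longrightarrow> j \<le> n \<Longrightarrow> a i \<le> a j"
proof (induction j)
  case 0 then show ?case by simp
next
  case (Suc j)
  show ?case
  proof (cases "i = Suc j")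
    case True then show ?thesis by simp
  next
    case False
    then have "a i \<le> a j" using Suc by auto
    moreover have "a j < a (Suc j)" using assms Suc.prems by auto
    ultimately show ?thesis by simp
  qed
qed

theorem proposition6:
  fixes p \<eta> :: "real \<Rightarrow> 'a::euclidean_space" and a :: "nat \<Rightarrow> real"
    and n :: nat and L K :: real
  assumes "L > 0" and "K > 0"
    and "arclength_polygon p a n L"
    and "maxCurv2 (\<lambda>k. p (a k)) n \<le> K"
    and "K * L \<le> pi"
    and "circle_arc_param K \<eta>"
  shows "norm (\<eta> L - \<eta> 0) < norm (p L - p 0)"
proof -
  note Lpos = assms(1) and Kpos = assms(2) and KL = assms(5)
  have a0: "a 0 = 0" and an: "a n = L" and inc: "\<forall>k<n. a k < a (Suc k)"
    and len: "\<forall>k<n. norm (p (a (Suc k)) - p (a k)) = a (Suc k) - a k"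
    using assms(3) unfolding arclength_polygon_def by auto
  define y where "y k = p (a k)" for k
  define l where "l k = a (Suc k) - a k" for k
  define t where "t k = (1 / l k) *\<^sub>R (y (Suc k) - y k)" for k
  define mid where "mid k = (a k + a (Suc k)) / 2" for k
  define c where "c = L / 2"
  have npos: "0 < n" using a0 an Lpos by (cases n) auto
  have lpos: "l k > 0" if "k < n" for k using inc that l_def by auto
  have edge: "y (Suc k) - y k = l k *\<^sub>R t k" if "k < n" for k
    using lpos[OF that] unfolding t_def by simp
  have tunit: "norm (t k) = 1" if "k < n" for k
    using lpos[OF that] len that unfolding t_def y_def l_def by simp
  have tt: "t k \<bullet> t k = 1" if "k < n" for k using tunit[OF that] by (simp add: norm_eq_1)
  have arange: "0 \<le> a k \<and> a k \<le> L" if "k \<le> n" for k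
    using mono_seq[OF inc, of 0 k] mono_seq[OF inc, of k n] that a0 an by auto
  have midr: "\<bar>mid k - c\<bar> < L / 2" if "k < n" for k
  proof -
    have "a k < a (Suc k)" using inc that by auto
    then show ?thesis using arange[of k] arange[of "Suc k"] that unfolding mid_def c_def abs_less_iff
      by auto
  qed
  have midmono: "mid i \<le> mid k" if "i \<le> k" "k < n" for i k
    using mono_seq[OF inc, of i k] mono_seq[OF inc, of "Suc i" "Suc k"] that unfolding mid_def by auto
  have lL: "l k \<le> L" if "k < n" for k
    using arange[of k] arange[of "Suc k"] that unfolding l_def by auto
  have curv: "arccos (t j \<bullet> t (Suc j)) \<le> K * (mid (Suc j) - mid j)" if "Suc j < n" for j
  proof -
    have n2: "\<not> n < 2" using that by auto
    have fin: "finite ((\<lambda>k. kappa_d2 (y (k - 1)) (y k) (y (k + 1))) ` {1..n - 1})" by simp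
    have mem: "kappa_d2 (y j) (y (Suc j)) (y (Suc (Suc j))) \<in> (\<lambda>k. kappa_d2 (y (k - 1)) (y k) (y (k + 1))) ` {1..n - 1}"
      using that by (intro image_eqI[of _ _ "Suc j"]) auto
    have "kappa_d2 (y j) (y (Suc j)) (y (Suc (Suc j))) \<le> K"
    proof -
      have "\<forall>x\<in>{Suc 0..n - Suc 0}. kappa_d2 (p (a (x - Suc 0))) (p (a x)) (p (a (Suc x))) \<le> K"
        using Max_ge[OF fin mem] assms(4) n2 unfolding maxCurv2_def y_def by auto
      moreover have "Suc j \<in> {Suc 0..n - Suc 0}" using that by auto
      ultimately show ?thesis unfolding y_def by fastforce
    qed
    moreover have "kappa_d2 (y j) (y (Suc j)) (y (Suc (Suc j))) = arccos (t j \<bullet> t (Suc j)) / ((l j + l (Suc j)) / 2)"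
    proof -
      have e1: "y (Suc j) - y j = l j *\<^sub>R t j" using edge that by auto
      have e2: "y (Suc (Suc j)) - y (Suc j) = l (Suc j) *\<^sub>R t (Suc j)" using edge that by auto
      have n1: "norm (y j - y (Suc j)) = l j" using e1 tunit[of j] lpos[of j] that
        by (subst norm_minus_commute) simp
      have n2: "norm (y (Suc (Suc j)) - y (Suc j)) = l (Suc j)" using e2 tunit[of "Suc j"] lpos[of "Suc j"] that
        by simp
      have "vec_angle (y (Suc j) - y j) (y (Suc (Suc j)) - y (Suc j)) = arccos (t j \<bullet> t (Suc j))"
        unfolding vec_angle_def e1 e2 using tunit[of j] tunit[of "Suc j"] lpos[of j] lpos[of "Suc j"] that
        by simp
      then show ?thesis unfolding kappa_d2_def n1 n2 by simp
    qed
    ultimately have A: "arccos (t j \<bullet> t (Suc j)) / ((l j + l (Suc j)) / 2) \<le> K" by simp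
    have me: "mid (Suc j) - mid j = (l j + l (Suc j)) / 2" unfolding mid_def l_def by (simp add: field_simps)
    have "(l j + l (Suc j)) / 2 > 0" using lpos[of j] lpos[of "Suc j"] that by simp
    then have "arccos (t j \<bullet> t (Suc j)) \<le> K * ((l j + l (Suc j)) / 2)"
      using A by (simp only: pos_divide_le_eq)
    then show ?thesis by (simp only: me)
  qed
  have chain: "arccos (t i \<bullet> t k) \<le> K * (mid k - mid i)" if "i \<le> k" "k < n" for i k
    using that
  proof (induction k)
    case 0 then show ?case using tt[of 0] by simp
  next
    case (Suc k)
    show ?case
    proof (cases "i = Suc k")
      case True then show ?thesis using tt[of "Suc k"] Suc.prems by simp
    next
      case False
      then have ik: "i \<le> k" using Suc.prems by simp
      have "arccos (t i \<bullet> t (Suc k)) \<le> arccos (t i \<bullet> t k) + arccos (t k \<bullet> t (Suc k))"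
        using tunit[of i] tunit[of k] tunit[of "Suc k"] Suc.prems ik by (intro angle_triangle) auto
      also have "\<dots> \<le> K * (mid k - mid i) + K * (mid (Suc k) - mid k)"
        using Suc.IH[OF ik] curv[of k] Suc.prems by (intro add_mono) auto
      finally show ?thesis by (simp add: algebra_simps)
    qed
  qed
  have key: "\<exists>m. norm m = 1 \<and> (\<forall>k<n. arccos (t k \<bullet> m) \<le> K * \<bar>mid k - c\<bar>)"
  proof (cases "c \<le> mid 0")
    case True
    show ?thesis
    proof (intro exI[of _ "t 0"] conjI allI impI)
      show "norm (t 0) = 1" using tunit npos by auto
      fix k assume k: "k < n"
      have "arccos (t k \<bullet> t 0) \<le> K * (mid k - mid 0)" using chain[of 0 k] k by (simp add: inner_commute)
      also have "\<dots> \<le> K * \<bar>mid k - c\<bar>" using True Kpos by (intro mult_left_mono) auto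
      finally show "arccos (t k \<bullet> t 0) \<le> K * \<bar>mid k - c\<bar>" .
    qed
  next
    case notA: False
    show ?thesis
    proof (cases "mid (n - 1) \<le> c")
      case True
      show ?thesis
      proof (intro exI[of _ "t (n - 1)"] conjI allI impI)
        show "norm (t (n - 1)) = 1" using tunit npos by auto
        fix k assume k: "k < n"
        have "arccos (t k \<bullet> t (n - 1)) \<le> K * (mid (n - 1) - mid k)" using chain[of k "n - 1"] k by simp
        also have "\<dots> \<le> K * \<bar>mid k - c\<bar>" using True Kpos by (intro mult_left_mono) auto
        finally show "arccos (t k \<bullet> t (n - 1)) \<le> K * \<bar>mid k - c\<bar>" .
      qed
    next
      case False
      then have "n - 1 > 0" using notA by (cases "n - 1") auto
      then obtain j where j: "j < n - 1" "mid j \<le> c" "c \<le> mid (Suc j)"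
        using crossing[of mid c "n - 1"] notA False by auto
      have jn: "Suc j < n" using j by simp
      define \<phi> where "\<phi> = arccos (t j \<bullet> t (Suc j))"
      define \<alpha> where "\<alpha> = min \<phi> (K * (c - mid j))"
      have phib: "\<phi> \<le> K * (mid (Suc j) - mid j)" using curv[OF jn] \<phi>_def by simp
      have "mid (Suc j) - mid j \<le> L / 2"
        using arange[of j] arange[of "Suc (Suc j)"] jn unfolding mid_def by (simp add: field_simps)
      hence "K * (mid (Suc j) - mid j) \<le> K * (L / 2)" using Kpos by (intro mult_left_mono) auto
      hence "\<phi> \<le> K * (L / 2)" using phib by linarith
      hence "\<phi> * 2 \<le> K * L" by simp
      hence philt: "\<phi> < pi" using KL pi_gt_zero by linarith
      have phi0: "0 \<le> \<phi>" unfolding \<phi>_def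
        using unit_inner_bound[of "t j" "t (Suc j)"] tunit[of j] tunit[of "Suc j"] jn
        by (intro arccos_lbound) (auto simp: abs_le_iff)
      have al0: "0 \<le> \<alpha>" using phi0 j Kpos unfolding \<alpha>_def by auto
      have alphi: "\<alpha> \<le> \<phi>" unfolding \<alpha>_def by simp
      obtain m where m: "norm m = 1" "arccos (t j \<bullet> m) \<le> \<alpha>" "arccos (m \<bullet> t (Suc j)) \<le> \<phi> - \<alpha>"
        using slerp_exists[of "t j" "t (Suc j)" \<alpha>] tunit[of j] tunit[of "Suc j"] jn philt al0 alphi
        unfolding \<phi>_def by auto
      have a1: "\<alpha> \<le> K * (c - mid j)" unfolding \<alpha>_def by simp
      have a2: "\<phi> - \<alpha> \<le> K * (mid (Suc j) - c)"
        using phib j Kpos unfolding \<alpha>_def by (auto simp: algebra_simps min_def)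
      show ?thesis
      proof (intro exI[of _ m] conjI allI impI)
        show "norm m = 1" by (rule m)
        fix k assume k: "k < n"
        show "arccos (t k \<bullet> m) \<le> K * \<bar>mid k - c\<bar>"
        proof (cases "k \<le> j")
          case True
          have "arccos (t k \<bullet> m) \<le> arccos (t k \<bullet> t j) + arccos (t j \<bullet> m)"
            using tunit[of k] tunit[of j] m(1) k jn by (intro angle_triangle) auto
          also have "\<dots> \<le> K * (mid j - mid k) + K * (c - mid j)"
            using chain[of k j] True jn m(2) a1 by (intro add_mono) auto
          also have "\<dots> = K * (c - mid k)" by (simp add: algebra_simps)
          also have "\<dots> \<le> K * \<bar>mid k - c\<bar>" using Kpos by (intro mult_left_mono) auto
          finally show ?thesis .
        next
          case False
          have "arccos (t k \<bullet> m) = arccos (m \<bullet> t k)" by (simp add: inner_commute)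
          also have "\<dots> \<le> arccos (m \<bullet> t (Suc j)) + arccos (t (Suc j) \<bullet> t k)"
            using tunit[of k] tunit[of "Suc j"] m(1) k jn by (intro angle_triangle) auto
          also have "\<dots> \<le> K * (mid (Suc j) - c) + K * (mid k - mid (Suc j))"
            using chain[of "Suc j" k] False k m(3) a2 by (intro add_mono) auto
          also have "\<dots> = K * (mid k - c)" by (simp add: algebra_simps)
          also have "\<dots> \<le> K * \<bar>mid k - c\<bar>" using Kpos by (intro mult_left_mono) auto
          finally show ?thesis .
        qed
      qed
    qed
  qed
  then obtain m where m: "norm m = 1" and mb: "\<And>k. k < n \<Longrightarrow> arccos (t k \<bullet> m) \<le> K * \<bar>mid k - c\<bar>"
    by blast
  have Psum: "p L - p 0 = (\<Sum>k<n. l k *\<^sub>R t k)"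
  proof -
    have "p L - p 0 = y n - y 0" using a0 an unfolding y_def by simp
    also have "\<dots> = (\<Sum>k<n. y (Suc k) - y k)" by (simp add: sum_lessThan_telescope)
    also have "\<dots> = (\<Sum>k<n. l k *\<^sub>R t k)" using edge by (intro sum.cong) auto
    finally show ?thesis .
  qed
  have step1: "l k * cos (K * (mid k - c)) \<le> l k * (t k \<bullet> m)" if k: "k < n" for k
  proof -
    have b: "\<bar>t k \<bullet> m\<bar> \<le> 1" using unit_inner_bound tunit[OF k] m by blast
    have "K * \<bar>mid k - c\<bar> \<le> K * (L / 2)" using midr[OF k] Kpos by (intro mult_left_mono) auto
    hence "K * \<bar>mid k - c\<bar> * 2 \<le> K * L" by simp
    hence kb: "K * \<bar>mid k - c\<bar> \<le> pi" using KL pi_gt_zero by linarith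
    have "cos (K * (mid k - c)) = cos (K * \<bar>mid k - c\<bar>)"
    proof (cases "mid k - c \<ge> 0")
      case True then show ?thesis by simp
    next
      case False
      then have "K * \<bar>mid k - c\<bar> = - (K * (mid k - c))" by (simp add: algebra_simps)
      then show ?thesis by (simp only: cos_minus)
    qed
    also have "\<dots> \<le> cos (arccos (t k \<bullet> m))"
      using mb[OF k] kb b arccos_lbound[of "t k \<bullet> m"]
      by (intro cos_monotone_0_pi_le) (auto simp: abs_le_iff)
    also have "\<dots> = t k \<bullet> m" using b by (simp add: cos_arccos_abs)
    finally show ?thesis using lpos[OF k] by (intro mult_left_mono) auto
  qed
  have step2: "(sin (K * (a (Suc k) - c)) - sin (K * (a k - c))) / K < l k * cos (K * (mid k - c))"
    if k: "k < n" for k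
  proof -
    define x where "x = K * (mid k - c)"
    define h where "h = K * l k / 2"
    have e1: "K * (a (Suc k) - c) = x + h" unfolding x_def h_def mid_def l_def by (simp add: field_simps)
    have e2: "K * (a k - c) = x - h" unfolding x_def h_def mid_def l_def by (simp add: field_simps)
    have "sin (x + h) - sin (x - h) = 2 * cos x * sin h" by (simp add: sin_add sin_diff)
    have h0: "0 < h" using lpos[OF k] Kpos unfolding h_def by simp
    have "K * l k \<le> K * L" using lL[OF k] Kpos by (intro mult_left_mono) auto
    hence hb: "h \<le> pi / 2" using KL unfolding h_def by linarith
    have "K * \<bar>mid k - c\<bar> < K * (L / 2)" using midr[OF k] Kpos by (intro mult_strict_left_mono) auto
    hence "K * \<bar>mid k - c\<bar> * 2 < K * L" by simp
    moreover have "\<bar>x\<bar> = K * \<bar>mid k - c\<bar>" unfolding x_def using Kpos by (simp add: abs_mult)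
    ultimately have xb: "\<bar>x\<bar> < pi / 2" using KL by linarith
    have cx: "cos x > 0" using xb by (intro cos_gt_zero_pi) (auto simp: abs_less_iff)
    have "(sin (x + h) - sin (x - h)) / K = 2 * cos x * sin h / K" by (simp add: sin_add sin_diff)
    also have "\<dots> < 2 * cos x * h / K" using sin_lt_self[OF h0 hb] cx Kpos
      by (intro divide_strict_right_mono) auto
    also have "\<dots> = l k * cos x" unfolding h_def using Kpos by simp
    finally show ?thesis unfolding e1 e2 x_def .
  qed
  have etaL: "norm (\<eta> L - \<eta> 0) = 2 * sin (K * L / 2) / K"
  proof -
    obtain c0 u v where uv: "u \<bullet> u = 1" "v \<bullet> v = 1" "u \<bullet> v = 0"
      and eta: "\<And>s. \<eta> s = c0 + (1 / K) *\<^sub>R (cos (K * s) *\<^sub>R u + sin (K * s) *\<^sub>R v)"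
      using assms(6) unfolding circle_arc_param_def by blast
    have d: "\<eta> L - \<eta> 0 = (1 / K) *\<^sub>R ((cos (K * L) - 1) *\<^sub>R u + sin (K * L) *\<^sub>R v)"
      unfolding eta by (simp add: algebra_simps)
    have "(norm (\<eta> L - \<eta> 0))^2 = (1 / K)^2 * (2 - 2 * cos (K * L))"
      unfolding power2_norm_eq_inner d using uv
      by (simp add: inner_add_left inner_add_right inner_commute power2_eq_square algebra_simps)
        (simp add: add_divide_distrib[symmetric] sin_cos_squared_add3)
    also have "cos (K * L) = 1 - 2 * (sin (K * L / 2))^2"
      using cos_double_sin[of "K * L / 2"] by simp
    also have "(1 / K)^2 * (2 - 2 * (1 - 2 * (sin (K * L / 2))^2)) = (2 * sin (K * L / 2) / K)^2"
      by (simp add: power2_eq_square field_simps)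
    finally have sq: "(norm (\<eta> L - \<eta> 0))^2 = (2 * sin (K * L / 2) / K)^2" .
    have "K * L \<le> pi * 2" using KL pi_gt_zero by linarith
    hence "sin (K * L / 2) \<ge> 0" using Kpos Lpos by (intro sin_ge_zero) auto
    hence "2 * sin (K * L / 2) / K \<ge> 0" using Kpos by simp
    then show ?thesis using sq by (simp add: power2_eq_iff_nonneg)
  qed
  have "norm (\<eta> L - \<eta> 0) = (\<Sum>k<n. (sin (K * (a (Suc k) - c)) - sin (K * (a k - c))) / K)"
  proof -
    have "(\<Sum>k<n. (sin (K * (a (Suc k) - c)) - sin (K * (a k - c))) / K)
        = (\<Sum>k<n. sin (K * (a (Suc k) - c)) - sin (K * (a k - c))) / K"
      by (simp add: sum_divide_distrib)
    also have "\<dots> = (sin (K * (L - c)) - sin (K * (0 - c))) / K"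
      using sum_lessThan_telescope[of "\<lambda>k. sin (K * (a k - c))" n] a0 an by simp
    also have "\<dots> = 2 * sin (K * L / 2) / K" unfolding c_def by (simp add: algebra_simps)
    finally show ?thesis using etaL by simp
  qed
  also have "\<dots> < (\<Sum>k<n. l k * cos (K * (mid k - c)))"
    using step2 npos by (intro sum_strict_mono) auto
  also have "\<dots> \<le> (\<Sum>k<n. l k * (t k \<bullet> m))"
    using step1 by (intro sum_mono) auto
  also have "\<dots> = (p L - p 0) \<bullet> m" unfolding Psum by (simp add: inner_sum_left)
  also have "\<dots> \<le> norm (p L - p 0)" using norm_cauchy_schwarz[of "p L - p 0" m] m by simp
  finally show ?thesis .
qed

end
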